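(* Let $\alpha<1$ and $\beta>1$, and define $v(q)=(1+|q|)^\alpha$ for $q<0$ and $v(q)=(1+|q|)^\beta$ for $q>0$. Then for every $t\ge0$ and every smooth compactly supported function $f$ on $\mathbb{R}^2$, with $q=r-t$, $$\Big\|\frac{v(q)^{1/2}}{1+|q|}f\Big\|_{L^2(\mathbb{R}^2)}\lesssim\|v(q)^{1/2}\partial_rf\|_{L^2(\mathbb{R}^2)},$$ where the implicit constant depends only on $\alpha,\beta$.
   Context: $(r,\theta)$ are polar coordinates on $\mathbb{R}^2$ and $\partial_r$ is the radial derivative. *)

theory Defs
  imports "HOL-Analysis.Analysis"
begin

fun Ck :: "nat \<Rightarrow> ('a::euclidean_space \<Rightarrow> real) \<Rightarrow> bool" where
  "Ck 0 f = continuous_on UNIV f"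
| "Ck (Suc n) f = ((\<forall>x. f differentiable (at x)) \<and> continuous_on UNIV f \<and>
      (\<forall>i\<in>Basis. Ck n (\<lambda>x. frechet_derivative f (at x) i)))"

definition smooth :: "('a::euclidean_space \<Rightarrow> real) \<Rightarrow> bool" where
  "smooth f \<longleftrightarrow> (\<forall>n. Ck n f)"

definition compact_support :: "('a::euclidean_space \<Rightarrow> real) \<Rightarrow> bool" where
  "compact_support f \<longleftrightarrow> compact (closure {x. f x \<noteq> 0})"

text \<open>Radial derivative d_r f (x) = Df(x) (x/|x|); at the origin (a null set) it is 0.\<close>
definition radial_deriv :: "('a::euclidean_space \<Rightarrow> real) \<Rightarrow> 'a \<Rightarrow> real" where
  "radial_deriv f x = frechet_derivative f (at x) (x /\<^sub>R norm x)"

text \<open>The weight v(q).  At q = 0 both branches give 1.\<close>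
definition weight_v :: "real \<Rightarrow> real \<Rightarrow> real \<Rightarrow> real" where
  "weight_v \<alpha> \<beta> q = (if q < 0 then (1 + \<bar>q\<bar>) powr \<alpha> else (1 + \<bar>q\<bar>) powr \<beta>)"

end

theory Submission
  imports Defs
begin


lemma intbd:
  fixes h :: "'a::euclidean_space \<Rightarrow> real"
  assumes h: "h \<in> borel_measurable lborel" and M: "\<And>x. \<bar>h x\<bar> \<le> M"
    and z: "\<And>x. norm x \<ge> \<rho> \<Longrightarrow> h x = 0"
  shows "integrable lborel h"
proof (rule Bochner_Integration.integrable_bound)
  show "integrable lborel (\<lambda>x. indicator (cball 0 \<rho>) x *\<^sub>R M)"
    by (rule borel_integrable_compact) auto
  show "h \<in> borel_measurable lborel" by fact
  show "AE x in lborel. norm (h x) \<le> norm (indicator (cball 0 \<rho>) x *\<^sub>R M)"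
  proof (rule AE_I2)
    fix x show "norm (h x) \<le> norm (indicator (cball 0 \<rho>) x *\<^sub>R M)"
      using M[of x] z[of x] by (cases "x \<in> cball 0 \<rho>") (auto simp: indicator_def)
  qed
qed

lemma lborel_integral_scale:
  fixes f :: "'a::euclidean_space \<Rightarrow> real"
  assumes c: "c \<noteq> 0" and f: "integrable lborel f"
  shows "(\<integral>x. f x \<partial>lborel) = \<bar>c\<bar>^DIM('a) * (\<integral>x. f (c *\<^sub>R x) \<partial>lborel)"
  using c f f[THEN borel_measurable_integrable]
  by (subst lborel_affine[OF c, of 0]) (simp add: integral_density integral_distr)

lemma dim2: "DIM(real^2) = 2" by simp

lemma scaling_identity:
  fixes G Gd :: "real^2 \<Rightarrow> real"
  assumes Gc: "continuous_on UNIV G"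
    and Gz: "\<And>x. norm x \<ge> \<rho> \<Longrightarrow> G x = 0"
    and Gdm: "Gd \<in> borel_measurable lborel"
    and N: "N \<in> null_sets lborel"
    and der: "\<And>x. x \<notin> N \<Longrightarrow> ((\<lambda>\<mu>. G (\<mu> *\<^sub>R x)) has_real_derivative Gd x) (at 1)"
    and dom: "\<And>x \<mu>. 1 \<le> \<mu> \<Longrightarrow> \<mu> \<le> 2 \<Longrightarrow> \<bar>G (\<mu> *\<^sub>R x) - G x\<bar> \<le> M * (\<mu> - 1)"
  shows "integrable lborel Gd \<and> (\<integral>x. Gd x \<partial>lborel) = -2 * (\<integral>x. G x \<partial>lborel)"
proof -
  define h where "h n = 1 / real (Suc n)" for n
  have hpos: "0 < h n" "h n \<le> 1" for n by (auto simp: h_def field_simps)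
  define s where "s n x = (G ((1 + h n) *\<^sub>R x) - G x) / h n" for n x
  have M0: "M \<ge> 0" using dom[of 2 0] by simp
  have contc: "continuous_on UNIV (\<lambda>x. G (c *\<^sub>R x))" for c
    by (rule continuous_on_compose2[OF Gc]) (auto intro!: continuous_intros)
  have smeas: "s n \<in> borel_measurable lborel" for n
  proof -
    have "continuous_on UNIV (s n)" unfolding s_def
      by (intro continuous_intros contc Gc) (use hpos[of n] in auto)
    then show ?thesis by (simp add: borel_measurable_continuous_onI)
  qed
  have wint: "integrable lborel (\<lambda>x. indicator (cball 0 \<rho>) x *\<^sub>R M)"
    by (rule borel_integrable_compact) auto
  have bnd: "AE x in lborel. norm (s n x) \<le> indicator (cball 0 \<rho>) x *\<^sub>R M" for n
  proof (rule AE_I2)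
    fix x
    show "norm (s n x) \<le> indicator (cball 0 \<rho>) x *\<^sub>R M"
    proof (cases "norm x \<le> \<rho>")
      case True
      have "\<bar>G ((1 + h n) *\<^sub>R x) - G x\<bar> \<le> M * h n" using dom[of "1 + h n" x] hpos[of n] by simp
      then have "\<bar>s n x\<bar> \<le> M" using hpos[of n] by (simp add: s_def abs_divide divide_le_eq)
      then show ?thesis using True by (simp add: indicator_def)
    next
      case False
      have "norm ((1 + h n) *\<^sub>R x) \<ge> norm x" using hpos[of n] by (simp add: ring_distribs)
      then have "G ((1 + h n) *\<^sub>R x) = 0" "G x = 0" using False by (auto intro!: Gz)
      then show ?thesis using M0 by (simp add: s_def indicator_def)
    qed
  qed
  have hlim: "h \<longlonglongrightarrow> 0" unfolding h_def by (rule LIMSEQ_inverse_real_of_nat[simplified inverse_eq_divide])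
  have lim: "AE x in lborel. (\<lambda>n. s n x) \<longlonglongrightarrow> Gd x"
  proof (rule AE_I')
    show "N \<in> null_sets lborel" by fact
    show "{x \<in> space lborel. \<not> (\<lambda>n. s n x) \<longlonglongrightarrow> Gd x} \<subseteq> N"
    proof safe
      fix x assume nl: "\<not> (\<lambda>n. s n x) \<longlonglongrightarrow> Gd x"
      show "x \<in> N"
      proof (rule ccontr)
      assume xN: "x \<notin> N"
      have "((\<lambda>y. (G (y *\<^sub>R x) - G (1 *\<^sub>R x)) / (y - 1)) \<longlongrightarrow> Gd x) (at 1)"
        using der[OF xN] by (simp add: has_field_derivative_iff)
      moreover have "filterlim (\<lambda>n. 1 + h n) (at 1) sequentially"
      proof (rule filterlim_atI)
        show "((\<lambda>n. 1 + h n) \<longlongrightarrow> 1) sequentially" using tendsto_add[OF tendsto_const hlim] by simp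
        show "\<forall>\<^sub>F n in sequentially. 1 + h n \<noteq> 1" using hpos by (simp add: less_imp_neq[symmetric] always_eventually)
      qed
      ultimately have "((\<lambda>n. (G ((1 + h n) *\<^sub>R x) - G (1 *\<^sub>R x)) / ((1 + h n) - 1)) \<longlongrightarrow> Gd x) sequentially"
        by (rule filterlim_compose[where f = "\<lambda>n. 1 + h n"])
      then have "(\<lambda>n. s n x) \<longlonglongrightarrow> Gd x" by (simp add: s_def)
      with nl show False by simp
    qed
    qed
  qed
  have Gdint: "integrable lborel Gd"
    and sint: "\<And>n. integrable lborel (s n)"
    and slim: "(\<lambda>n. integral\<^sup>L lborel (s n)) \<longlonglongrightarrow> integral\<^sup>L lborel Gd"
    using integrable_dominated_convergence[OF Gdm smeas wint lim bnd]
      integrable_dominated_convergence2[OF Gdm smeas wint lim bnd]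
      integral_dominated_convergence[OF Gdm smeas wint lim bnd] by auto
  obtain B where B: "\<And>x. x \<in> cball 0 \<rho> \<Longrightarrow> \<bar>G x\<bar> \<le> B"
  proof -
    have "compact (G ` cball 0 \<rho>)"
      by (rule compact_continuous_image) (auto intro: continuous_on_subset[OF Gc])
    then obtain B where "\<forall>y\<in>G ` cball 0 \<rho>. norm y \<le> B" using compact_imp_bounded bounded_iff by metis
    then show ?thesis using that by (metis image_eqI real_norm_def)
  qed
  have Gint: "integrable lborel G"
  proof (rule intbd[where M = "max B 0" and \<rho> = \<rho>])
    show "G \<in> borel_measurable lborel" using Gc by (simp add: borel_measurable_continuous_onI)
    show "\<bar>G x\<bar> \<le> max B 0" for x
    proof (cases "norm x \<le> \<rho>")
      case True then show ?thesis using B[of x] by auto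
    next
      case False then show ?thesis using Gz[of x] by force
    qed
  qed (use Gz in auto)
  define I where "I = (\<integral>x. G x \<partial>lborel)"
  have seq: "integral\<^sup>L lborel (s n) = - ((2 + h n) / (1 + h n)^2) * I" for n
  proof -
    have e: "(\<lambda>x. G ((1 + h n) *\<^sub>R x)) = (\<lambda>x. h n * s n x + G x)"
      using hpos[of n] by (auto simp: s_def)
    have i1: "integrable lborel (\<lambda>x. G ((1 + h n) *\<^sub>R x))"
      unfolding e using sint Gint by auto
    have sc: "I = (1 + h n)^2 * (\<integral>x. G ((1 + h n) *\<^sub>R x) \<partial>lborel)"
      unfolding I_def using lborel_integral_scale[OF _ Gint, of "1 + h n"] hpos[of n] by simp
    have "integral\<^sup>L lborel (s n) = ((\<integral>x. G ((1 + h n) *\<^sub>R x) \<partial>lborel) - I) / h n"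
      unfolding s_def I_def using i1 Gint by simp
    also have "\<dots> = (I / (1 + h n)^2 - I) / h n"
      using sc hpos[of n] by (simp add: field_simps)
    also have "\<dots> = - ((2 + h n) / (1 + h n)^2) * I"
    proof -
      have p: "(1 + h n)^2 > 0" "h n \<noteq> 0" using hpos[of n] by auto
      have "I / (1 + h n)^2 - I = - (h n * (2 + h n) / (1 + h n)^2) * I"
        using p by (simp add: field_simps power2_eq_square)
      then show ?thesis using p by simp
    qed
    finally show ?thesis .
  qed
  have "(\<lambda>n. - ((2 + h n) / (1 + h n)^2) * I) \<longlonglongrightarrow> - ((2 + 0) / (1 + 0)^2) * I"
    by (intro tendsto_intros hlim) auto
  then have "(\<lambda>n. integral\<^sup>L lborel (s n)) \<longlonglongrightarrow> -2 * I" by (simp add: seq)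
  with slim have "integral\<^sup>L lborel Gd = -2 * I" by (rule LIMSEQ_unique)
  then show ?thesis using Gdint I_def by simp
qed


lemma support_ball:
  fixes f :: "'a::euclidean_space \<Rightarrow> real"
  assumes "compact_support f"
  shows "\<exists>\<rho>>0. \<forall>x. norm x \<ge> \<rho> \<longrightarrow> f x = 0 \<and> frechet_derivative f (at x) = (\<lambda>_. 0)"
proof -
  let ?S = "closure {x. f x \<noteq> 0}"
  have "bounded ?S" using assms compact_imp_bounded unfolding compact_support_def by blast
  then obtain \<rho> where \<rho>: "\<rho> > 0" "?S \<subseteq> ball 0 \<rho>" using bounded_subset_ballD by blast
  have "f x = 0 \<and> frechet_derivative f (at x) = (\<lambda>_. 0)" if x: "norm x \<ge> \<rho>" for x
  proof -
    have xS: "x \<in> - ?S" using x \<rho>(2) by (metis ComplI mem_ball_0 not_less subsetD)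
    have z: "\<And>y. y \<in> - ?S \<Longrightarrow> f y = 0" by (meson ComplD closure_subset mem_Collect_eq subsetD)
    have d: "((\<lambda>_. 0) has_derivative (\<lambda>_. 0)) (at x)" by (rule has_derivative_const)
    have o: "open (- ?S)" by (simp add: open_Compl)
    have "(f has_derivative (\<lambda>_. 0)) (at x)"
      by (rule has_derivative_transform_within_open[OF d o xS]) (rule sym, erule z)
    then have "(\<lambda>_. 0) = frechet_derivative f (at x)" by (rule frechet_derivative_at)
    with z[OF xS] show ?thesis by simp
  qed
  with \<rho>(1) show ?thesis by (intro exI[of _ \<rho>]) auto
qed
lemma smooth_facts:
  fixes f :: "'a::euclidean_space \<Rightarrow> real"
  assumes "smooth f"
  shows "\<And>x. f differentiable (at x)" "continuous_on UNIV f"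
    "\<And>i. i \<in> Basis \<Longrightarrow> continuous_on UNIV (\<lambda>x. frechet_derivative f (at x) i)"
proof -
  have "Ck (Suc 0) f" using assms by (simp add: smooth_def)
  then show "\<And>x. f differentiable (at x)" "continuous_on UNIV f"
    "\<And>i. i \<in> Basis \<Longrightarrow> continuous_on UNIV (\<lambda>x. frechet_derivative f (at x) i)"
    by auto
qed

lemma fd_rep:
  fixes f :: "'a::euclidean_space \<Rightarrow> real"
  assumes "f differentiable (at x)"
  shows "frechet_derivative f (at x) y = (\<Sum>i\<in>Basis. (y \<bullet> i) * frechet_derivative f (at x) i)"
proof -
  have lin: "linear (frechet_derivative f (at x))" using assms by (rule linear_frechet_derivative)
  have "frechet_derivative f (at x) y = frechet_derivative f (at x) (\<Sum>i\<in>Basis. (y \<bullet> i) *\<^sub>R i)"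
    by (metis euclidean_representation)
  also have "\<dots> = (\<Sum>i\<in>Basis. (y \<bullet> i) * frechet_derivative f (at x) i)"
    by (simp add: linear_sum[OF lin] linear_scale[OF lin] o_def)
  finally show ?thesis .
qed

lemma fd_scale:
  fixes f :: "'a::euclidean_space \<Rightarrow> real"
  assumes "f differentiable (at x)"
  shows "frechet_derivative f (at x) (c *\<^sub>R y) = c * frechet_derivative f (at x) y"
proof -
  have lin: "linear (frechet_derivative f (at x))" using assms by (rule linear_frechet_derivative)
  show ?thesis by (simp add: linear_scale[OF lin])
qed

lemma radial_deriv_eq:
  fixes f :: "'a::euclidean_space \<Rightarrow> real"
  assumes "f differentiable (at x)"
  shows "radial_deriv f x = frechet_derivative f (at x) x / norm x"
  unfolding radial_deriv_def using fd_scale[OF assms, of "inverse (norm x)" x]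
  by (simp add: divide_inverse mult.commute)



lemma key_aux:
  fixes r s p c m :: real
  assumes r: "0 \<le> r" and s: "1 \<le> s" and p: "0 < p" and c: "m \<le> c" and m1: "m \<le> 1" and m0: "0 < m"
  shows "r * ((1/m) * (c * p/(1+r) - s * p/(1+r)^2)) + 2*((1/m) * s * p/(1+r)) \<ge> p"
proof -
  have r1: "0 < 1 + r" using r by simp
  have eq: "r * ((1/m) * (c * p/(1+r) - s * p/(1+r)^2)) + 2*((1/m) * s * p/(1+r))
      = p / (m * (1+r)^2) * (c * r * (1+r) + s * (2 + r))"
    using r1 m0 by (simp add: divide_simps) (simp add: algebra_simps power2_eq_square)
  have "c * r * (1+r) \<ge> m * r * (1+r)" using c r by (simp add: mult_right_mono)
  moreover have "s * (2 + r) \<ge> 1 * (1 + r)" using s r by (intro mult_mono) auto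
  moreover have "1 * (1 + r) \<ge> m * (1 + r)" using m1 r1 by (intro mult_right_mono) auto
  ultimately have b: "c * r * (1+r) + s * (2 + r) \<ge> m * (1+r)^2"
    by (simp add: power2_eq_square algebra_simps)
  have "p / (m * (1+r)^2) * (c * r * (1+r) + s * (2 + r)) \<ge> p / (m * (1+r)^2) * (m * (1+r)^2)"
    using b p m0 r1 by (intro mult_left_mono) auto
  also have "p / (m * (1+r)^2) * (m * (1+r)^2) = p" using m0 r1 by simp
  finally show ?thesis using eq by simp
qed

definition mm :: "real \<Rightarrow> real \<Rightarrow> real" where "mm \<alpha> \<beta> = min (min (1 - \<alpha>) (\<beta> - 1)) 1"
definition psi :: "real \<Rightarrow> real \<Rightarrow> real \<Rightarrow> real" where
  "psi \<alpha> \<beta> q = (if q < 0 then (1 + \<bar>q\<bar>) powr (\<alpha> - 1) else (1 + \<bar>q\<bar>) powr (\<beta> - 1))"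
definition KK :: "real \<Rightarrow> real \<Rightarrow> real \<Rightarrow> real \<Rightarrow> real" where
  "KK \<alpha> \<beta> t r = (1 / mm \<alpha> \<beta>) * psi \<alpha> \<beta> (r - t) / (1 + r)"
definition Kd :: "real \<Rightarrow> real \<Rightarrow> real \<Rightarrow> real \<Rightarrow> real" where
  "Kd \<alpha> \<beta> t r = (if r < t
     then (1 / mm \<alpha> \<beta>) * ((1 - \<alpha>) * (1 + t - r) powr (\<alpha> - 2) / (1 + r) - (1 + t - r) powr (\<alpha> - 1) / (1 + r)^2)
     else (1 / mm \<alpha> \<beta>) * ((\<beta> - 1) * (1 + r - t) powr (\<beta> - 2) / (1 + r) - (1 + r - t) powr (\<beta> - 1) / (1 + r)^2))"
definition W1 :: "real \<Rightarrow> real \<Rightarrow> real \<Rightarrow> real" where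
  "W1 \<alpha> \<beta> q = weight_v \<alpha> \<beta> q / (1 + \<bar>q\<bar>)^2"

lemma mm_pos: "\<alpha> < 1 \<Longrightarrow> 1 < \<beta> \<Longrightarrow> 0 < mm \<alpha> \<beta>" by (simp add: mm_def)

lemma powr_split:
  fixes s a :: real assumes "0 < s"
  shows "s powr (a - 1) = s * s powr (a - 2)" "s powr a = s^2 * s powr (a - 2)"
proof -
  have e1: "a - 1 = 1 + (a - 2)" by simp
  have "s powr (a - 1) = s powr 1 * s powr (a - 2)" unfolding e1 by (rule powr_add)
  moreover have "s powr 1 = s" using assms by simp
  ultimately show "s powr (a - 1) = s * s powr (a - 2)" by simp
  have e2: "a = 2 + (a - 2)" by simp
  have "s powr a = s powr 2 * s powr (a - 2)" by (subst e2, rule powr_add)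
  then show "s powr a = s^2 * s powr (a - 2)" using assms by (simp add: powr_numeral)
qed

lemma key_ineq:
  assumes a: "\<alpha> < 1" and b: "1 < \<beta>" and r: "0 \<le> r"
  shows "r * Kd \<alpha> \<beta> t r + 2 * KK \<alpha> \<beta> t r \<ge> W1 \<alpha> \<beta> (r - t)"
proof (cases "r < t")
  case True
  define s where "s = 1 + t - r"
  have s1: "1 \<le> s" "0 < s" using True by (auto simp: s_def)
  have abs: "1 + \<bar>r - t\<bar> = s" using True by (simp add: s_def)
  have p: "0 < s powr (\<alpha> - 2)" using s1 by simp
  have "r * ((1/mm \<alpha> \<beta>) * ((1 - \<alpha>) * s powr (\<alpha> - 2) / (1+r) - s * s powr (\<alpha> - 2) / (1+r)^2))
      + 2 * ((1/mm \<alpha> \<beta>) * s * s powr (\<alpha> - 2) / (1+r)) \<ge> s powr (\<alpha> - 2)"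
    by (rule key_aux[OF r s1(1) p]) (use a b in \<open>auto simp: mm_def\<close>)
  moreover have "W1 \<alpha> \<beta> (r - t) = s powr (\<alpha> - 2)"
  proof -
    have "W1 \<alpha> \<beta> (r - t) = s powr \<alpha> / s^2" unfolding W1_def weight_v_def abs using True by simp
    then show ?thesis using s1 powr_split(2)[of s \<alpha>] by simp
  qed
  moreover have "Kd \<alpha> \<beta> t r = (1/mm \<alpha> \<beta>) * ((1 - \<alpha>) * s powr (\<alpha> - 2) / (1+r) - s * s powr (\<alpha> - 2) / (1+r)^2)"
    unfolding Kd_def s_def[symmetric] using True s1 by (simp add: powr_split(1))
  moreover have "KK \<alpha> \<beta> t r = (1/mm \<alpha> \<beta>) * s * s powr (\<alpha> - 2) / (1+r)"
    unfolding KK_def psi_def abs using True s1 by (simp add: powr_split(1))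
  ultimately show ?thesis by simp
next
  case False
  define s where "s = 1 + r - t"
  have s1: "1 \<le> s" "0 < s" using False by (auto simp: s_def)
  have abs: "1 + \<bar>r - t\<bar> = s" using False by (simp add: s_def)
  have p: "0 < s powr (\<beta> - 2)" using s1 by simp
  have "r * ((1/mm \<alpha> \<beta>) * ((\<beta> - 1) * s powr (\<beta> - 2) / (1+r) - s * s powr (\<beta> - 2) / (1+r)^2))
      + 2 * ((1/mm \<alpha> \<beta>) * s * s powr (\<beta> - 2) / (1+r)) \<ge> s powr (\<beta> - 2)"
    by (rule key_aux[OF r s1(1) p]) (use a b in \<open>auto simp: mm_def\<close>)
  moreover have "W1 \<alpha> \<beta> (r - t) = s powr (\<beta> - 2)"
  proof -
    have "W1 \<alpha> \<beta> (r - t) = s powr \<beta> / s^2" unfolding W1_def weight_v_def abs using False by simp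
    then show ?thesis using s1 powr_split(2)[of s \<beta>] by simp
  qed
  moreover have "Kd \<alpha> \<beta> t r = (1/mm \<alpha> \<beta>) * ((\<beta> - 1) * s powr (\<beta> - 2) / (1+r) - s * s powr (\<beta> - 2) / (1+r)^2)"
    unfolding Kd_def s_def[symmetric] using False s1 by (simp add: powr_split(1))
  moreover have "KK \<alpha> \<beta> t r = (1/mm \<alpha> \<beta>) * s * s powr (\<beta> - 2) / (1+r)"
    unfolding KK_def psi_def abs using False s1 by (simp add: powr_split(1))
  ultimately show ?thesis by simp
qed

lemma psi_nonneg: "0 \<le> psi \<alpha> \<beta> q" by (simp add: psi_def)
lemma wv_nonneg: "0 \<le> weight_v \<alpha> \<beta> q" by (simp add: weight_v_def)
lemma W1_nonneg: "0 \<le> W1 \<alpha> \<beta> q" by (simp add: W1_def wv_nonneg)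


lemma psi_sq: "(psi \<alpha> \<beta> q)^2 = W1 \<alpha> \<beta> q * weight_v \<alpha> \<beta> q"
proof -
  define u where "u = 1 + \<bar>q\<bar>"
  have u: "0 < u" by (simp add: u_def)
  have d: "u powr (c - 1) = u powr c / u" for c
    using u by (simp add: powr_diff)
  show ?thesis
    unfolding psi_def W1_def weight_v_def u_def[symmetric]
    using u by (simp add: d power2_eq_square)
qed
lemma KK_bounds:
  assumes a: "\<alpha> < 1" and b: "1 < \<beta>" and r: "0 \<le> r"
  shows "0 \<le> KK \<alpha> \<beta> t r" "r * KK \<alpha> \<beta> t r \<le> (1 / mm \<alpha> \<beta>) * psi \<alpha> \<beta> (r - t)"
proof -
  have m: "0 < mm \<alpha> \<beta>" using mm_pos[OF a b] .
  have ps: "0 \<le> psi \<alpha> \<beta> (r - t)" by (rule psi_nonneg)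
  show "0 \<le> KK \<alpha> \<beta> t r" using m ps r by (simp add: KK_def)
  have "r * KK \<alpha> \<beta> t r = (1 / mm \<alpha> \<beta>) * psi \<alpha> \<beta> (r - t) * (r / (1 + r))"
    by (simp add: KK_def)
  also have "\<dots> \<le> (1 / mm \<alpha> \<beta>) * psi \<alpha> \<beta> (r - t) * 1"
    using m ps r by (intro mult_left_mono) auto
  finally show "r * KK \<alpha> \<beta> t r \<le> (1 / mm \<alpha> \<beta>) * psi \<alpha> \<beta> (r - t)" by simp
qed

lemma amgm_aux:
  fixes A w v p a R :: real
  assumes A: "0 \<le> A" and w: "0 \<le> w" and v: "0 \<le> v" and p: "0 \<le> p" and pp: "p^2 = w * v"
  shows "2 * A * p * \<bar>a\<bar> * \<bar>R\<bar> \<le> w * a^2 / 2 + 2 * A^2 * v * R^2"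
proof -
  define X where "X = sqrt w * \<bar>a\<bar>"
  define Y where "Y = sqrt v * \<bar>R\<bar>"
  have "p = sqrt (p^2)" using p by simp
  then have ps: "p = sqrt w * sqrt v" using pp by (simp add: real_sqrt_mult)
  have e1: "2 * A * p * \<bar>a\<bar> * \<bar>R\<bar> = 2 * A * X * Y" by (simp add: X_def Y_def ps mult_ac)
  have e2: "w * a^2 / 2 + 2 * A^2 * v * R^2 = X^2 / 2 + 2 * A^2 * Y^2"
    using w v by (simp add: X_def Y_def power_mult_distrib)
  have "0 \<le> (X - 2 * A * Y)^2" by simp
  then have "2 * A * X * Y \<le> X^2 / 2 + 2 * A^2 * Y^2"
    by (simp add: power2_eq_square algebra_simps)
  then show ?thesis unfolding e1 e2 .
qed

lemma pointwise_ineq: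
  assumes a: "\<alpha> < 1" and b: "1 < \<beta>" and r: "0 \<le> r"
  shows "- 2 * (r * KK \<alpha> \<beta> t r * y * R) \<le> W1 \<alpha> \<beta> (r - t) * y^2 / 2 + 2 * (1 / mm \<alpha> \<beta>)^2 * weight_v \<alpha> \<beta> (r - t) * R^2"
proof -
  define A where "A = 1 / mm \<alpha> \<beta>"
  define k where "k = r * KK \<alpha> \<beta> t r"
  have A: "0 \<le> A" using mm_pos[OF a b] by (simp add: A_def)
  have k0: "0 \<le> k" using KK_bounds(1)[OF a b r] r by (simp add: k_def)
  have "- (k * y * R) \<le> \<bar>k * y * R\<bar>" by (rule abs_ge_minus_self)
  also have "\<bar>k * y * R\<bar> = k * \<bar>y\<bar> * \<bar>R\<bar>" using k0 by (simp add: abs_mult)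
  finally have "- 2 * (k * y * R) \<le> 2 * k * \<bar>y\<bar> * \<bar>R\<bar>" by (simp add: mult_ac)
  also have "\<dots> \<le> 2 * A * psi \<alpha> \<beta> (r - t) * \<bar>y\<bar> * \<bar>R\<bar>"
  proof -
    have kb: "k \<le> A * psi \<alpha> \<beta> (r - t)" using KK_bounds(2)[OF a b r, of t] by (simp add: A_def k_def)
    have "2 * k * \<bar>y\<bar> * \<bar>R\<bar> \<le> 2 * (A * psi \<alpha> \<beta> (r - t)) * \<bar>y\<bar> * \<bar>R\<bar>"
      using kb by (intro mult_right_mono) auto
    then show ?thesis by (simp add: mult_ac)
  qed
  also have "\<dots> \<le> W1 \<alpha> \<beta> (r - t) * y^2 / 2 + 2 * A^2 * weight_v \<alpha> \<beta> (r - t) * R^2"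
    by (rule amgm_aux[OF A W1_nonneg wv_nonneg psi_nonneg psi_sq])
  finally show ?thesis by (simp add: A_def k_def)
qed



lemma psi_alt: "psi \<alpha> \<beta> q = (1 + max (- q) 0) powr (\<alpha> - 1) * (1 + max q 0) powr (\<beta> - 1)"
  by (simp add: psi_def)
lemma wv_alt: "weight_v \<alpha> \<beta> q = (1 + max (- q) 0) powr \<alpha> * (1 + max q 0) powr \<beta>"
  by (simp add: weight_v_def)

lemma psi_cont: "continuous_on UNIV (psi \<alpha> \<beta>)"
  unfolding psi_alt[abs_def] by (intro continuous_intros) auto
lemma wv_cont: "continuous_on UNIV (weight_v \<alpha> \<beta>)"
  unfolding wv_alt[abs_def] by (intro continuous_intros) auto

lemma cont_bound:
  fixes h :: "real \<Rightarrow> real"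
  assumes "continuous_on {a..b} h"
  shows "\<exists>B. \<forall>r\<in>{a..b}. \<bar>h r\<bar> \<le> B"
proof -
  have "compact (h ` {a..b})" by (rule compact_continuous_image[OF assms]) simp
  then obtain B where "\<forall>y\<in>h ` {a..b}. norm y \<le> B" using compact_imp_bounded bounded_iff by metis
  then show ?thesis by auto
qed

lemma deriv_alg:
  fixes P Q u m c :: real
  assumes "u \<noteq> 0" "m \<noteq> 0"
  shows "((1/m) * ((c - 1) * P * -1) * u - (1/m) * Q * 1) / (u * u) = (1/m) * ((1 - c) * P / u - Q / u^2)"
  using assms by (simp add: field_simps power2_eq_square)

lemma K1_deriv:
  fixes c m t r :: real
  assumes "r < 1 + t" "-1 < r" "m \<noteq> 0"
  shows "((\<lambda>r. (1/m) * (1 + t - r) powr (c - 1) / (1 + r)) has_real_derivative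
     (1/m) * ((1 - c) * (1 + t - r) powr (c - 2) / (1 + r) - (1 + t - r) powr (c - 1) / (1 + r)^2)) (at r)"
proof -
  have b: "0 < 1 + t - r" "1 + r \<noteq> 0" "m \<noteq> 0" using assms by auto
  have d: "(1 + t - r) powr (c - 1 - of_nat 1) = (1 + t - r) powr (c - 2)" by simp
  show ?thesis
  proof -
    have g: "((\<lambda>r. 1 + t - r) has_real_derivative -1) (at r)"
      by (auto intro!: derivative_eq_intros)
    have p: "((\<lambda>r. (1 + t - r) powr (c - 1)) has_real_derivative (c - 1) * (1 + t - r) powr (c - 1 - of_nat 1) * -1) (at r)"
      by (rule DERIV_fun_powr[OF g b(1)])
    have q: "((\<lambda>r. 1 + r) has_real_derivative 1) (at r)" by (auto intro!: derivative_eq_intros)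
    have "((\<lambda>r. (1/m) * (1 + t - r) powr (c - 1) / (1 + r)) has_real_derivative
       ((1/m) * ((c - 1) * (1 + t - r) powr (c - 1 - of_nat 1) * -1) * (1 + r) - (1/m) * (1 + t - r) powr (c - 1) * 1) / ((1 + r) * (1 + r))) (at r)"
      by (rule DERIV_divide[OF DERIV_cmult[OF p] q]) (use b in simp)
    then show ?thesis unfolding d deriv_alg[OF b(2,3)] .
  qed
qed


lemma deriv_alg2:
  fixes P Q u m c :: real
  assumes "u \<noteq> 0" "m \<noteq> 0"
  shows "((1/m) * ((c - 1) * P * 1) * u - (1/m) * Q * 1) / (u * u) = (1/m) * ((c - 1) * P / u - Q / u^2)"
  using assms by (simp add: field_simps power2_eq_square)

lemma K2_deriv:
  fixes c m t r :: real
  assumes "t - 1 < r" "-1 < r" "m \<noteq> 0"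
  shows "((\<lambda>r. (1/m) * (1 + r - t) powr (c - 1) / (1 + r)) has_real_derivative
     (1/m) * ((c - 1) * (1 + r - t) powr (c - 2) / (1 + r) - (1 + r - t) powr (c - 1) / (1 + r)^2)) (at r)"
proof -
  have b: "0 < 1 + r - t" "1 + r \<noteq> 0" "m \<noteq> 0" using assms by auto
  have d: "(1 + r - t) powr (c - 1 - of_nat 1) = (1 + r - t) powr (c - 2)" by simp
  show ?thesis
  proof -
    have g: "((\<lambda>r. 1 + r - t) has_real_derivative 1) (at r)"
      by (auto intro!: derivative_eq_intros)
    have p: "((\<lambda>r. (1 + r - t) powr (c - 1)) has_real_derivative (c - 1) * (1 + r - t) powr (c - 1 - of_nat 1) * 1) (at r)"
      by (rule DERIV_fun_powr[OF g b(1)])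
    have q: "((\<lambda>r. 1 + r) has_real_derivative 1) (at r)" by (auto intro!: derivative_eq_intros)
    have "((\<lambda>r. (1/m) * (1 + r - t) powr (c - 1) / (1 + r)) has_real_derivative
       ((1/m) * ((c - 1) * (1 + r - t) powr (c - 1 - of_nat 1) * 1) * (1 + r) - (1/m) * (1 + r - t) powr (c - 1) * 1) / ((1 + r) * (1 + r))) (at r)"
      by (rule DERIV_divide[OF DERIV_cmult[OF p] q]) (use b in simp)
    then show ?thesis unfolding d deriv_alg2[OF b(2,3)] .
  qed
qed

lemma KK_deriv:
  assumes a: "\<alpha> < 1" and b: "1 < \<beta>" and r: "0 < r" "r \<noteq> t"
  shows "(KK \<alpha> \<beta> t has_real_derivative Kd \<alpha> \<beta> t r) (at r)"
proof -
  have m: "mm \<alpha> \<beta> \<noteq> 0" using mm_pos[OF a b] by simp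
  show ?thesis
  proof (cases "r < t")
    case True
    have "((\<lambda>r. (1/mm \<alpha> \<beta>) * (1 + t - r) powr (\<alpha> - 1) / (1 + r)) has_real_derivative Kd \<alpha> \<beta> t r) (at r)"
      unfolding Kd_def using True by (simp only: if_True) (rule K1_deriv, use r m in auto)
    then show ?thesis
    proof (rule has_field_derivative_transform_within_open[where S = "{-1<..<t}"])
      show "r \<in> {-1<..<t}" using r True by auto
      fix y assume y: "y \<in> {-1<..<t}"
      then have e: "1 + \<bar>y - t\<bar> = 1 + t - y" by auto
      then show "(1/mm \<alpha> \<beta>) * (1 + t - y) powr (\<alpha> - 1) / (1 + y) = KK \<alpha> \<beta> t y"
        using y unfolding KK_def psi_def e by simp
    qed simp
  next
    case False
    then have F: "t < r" using r by simp
    have "((\<lambda>r. (1/mm \<alpha> \<beta>) * (1 + r - t) powr (\<beta> - 1) / (1 + r)) has_real_derivative Kd \<alpha> \<beta> t r) (at r)"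
      unfolding Kd_def using False by (simp only: if_False) (rule K2_deriv, use r m F in auto)
    then show ?thesis
    proof (rule has_field_derivative_transform_within_open[where S = "{t<..}"])
      show "r \<in> {t<..}" using F by auto
      fix y assume y: "y \<in> {t<..}"
      then have e: "1 + \<bar>y - t\<bar> = 1 + y - t" by auto
      then show "(1/mm \<alpha> \<beta>) * (1 + y - t) powr (\<beta> - 1) / (1 + y) = KK \<alpha> \<beta> t y"
        using y unfolding KK_def psi_def e by simp
    qed simp
  qed
qed



lemma deriv_bound_finite:
  fixes g g' :: "real \<Rightarrow> real"
  assumes S: "finite S" and ab: "a \<le> b" and c: "continuous_on {a..b} g"
    and d: "\<And>\<nu>. \<nu> \<in> {a<..<b} - S \<Longrightarrow> (g has_real_derivative g' \<nu>) (at \<nu>)"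
    and M: "\<And>\<nu>. \<nu> \<in> {a..b} \<Longrightarrow> \<bar>g' \<nu>\<bar> \<le> M"
  shows "\<bar>g b - g a\<bar> \<le> M * (b - a)"
proof -
  have "(g' has_integral (g b - g a)) {a..b}"
    by (rule fundamental_theorem_of_calculus_interior_strong[OF S ab _ c])
       (use d in \<open>auto simp: has_real_derivative_iff_has_vector_derivative\<close>)
  moreover have M0: "0 \<le> M" using M[of a] ab by auto
  ultimately have "norm (g b - g a) \<le> M * measure lborel {a..b}"
    by (intro has_integral_bound_real[OF M0 S]) (use M in auto)
  then show ?thesis using ab by simp
qed


lemma intbd2:
  fixes h :: "'a::euclidean_space \<Rightarrow> real"
  assumes h: "h \<in> borel_measurable lborel" and M: "\<And>x. norm x < \<rho> \<Longrightarrow> \<bar>h x\<bar> \<le> M"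
    and z: "\<And>x. norm x \<ge> \<rho> \<Longrightarrow> h x = 0"
  shows "integrable lborel h"
proof (rule intbd[OF h, of "max M 0" \<rho>])
  fix x show "\<bar>h x\<bar> \<le> max M 0"
    using M[of x] z[of x] by (cases "norm x < \<rho>") auto
qed (use z in auto)

lemma abs_mult_le: fixes a b A B :: real shows "\<bar>a\<bar> \<le> A \<Longrightarrow> \<bar>b\<bar> \<le> B \<Longrightarrow> \<bar>a * b\<bar> \<le> A * B"
  by (simp add: abs_mult mult_mono')



lemma main_ineq:
  fixes f :: "real^2 \<Rightarrow> real"
  assumes a: "\<alpha> < 1" and b: "1 < \<beta>" and t: "0 \<le> t" and sm: "smooth f" and cs: "compact_support f"
  shows "integrable lborel (\<lambda>x. W1 \<alpha> \<beta> (norm x - t) * (f x)^2)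
    \<and> integrable lborel (\<lambda>x. weight_v \<alpha> \<beta> (norm x - t) * (radial_deriv f x)^2)
    \<and> (\<integral>x. W1 \<alpha> \<beta> (norm x - t) * (f x)^2 \<partial>lborel)
       \<le> 4 * (1 / mm \<alpha> \<beta>)^2 * (\<integral>x. weight_v \<alpha> \<beta> (norm x - t) * (radial_deriv f x)^2 \<partial>lborel)"
proof -
  obtain \<rho> where \<rho>: "\<rho> > 0" and supp: "\<And>x. norm x \<ge> \<rho> \<Longrightarrow> f x = 0 \<and> frechet_derivative f (at x) = (\<lambda>_. 0)"
    using support_ball[OF cs] by blast
  note fd = smooth_facts[OF sm]
  define P where "P i y = frechet_derivative f (at y) i" for i y
  define DD where "DD y x = (\<Sum>i\<in>Basis. (x \<bullet> i) * P i y)" for y x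
  have DDeq: "frechet_derivative f (at y) x = DD y x" for y x
    unfolding DD_def P_def by (rule fd_rep[OF fd(1)])
  have Pc: "continuous_on UNIV (P i)" if "i \<in> Basis" for i
    unfolding P_def[abs_def] using fd(3)[OF that] .
  define D where "D x = DD x x" for x
  have Dc: "continuous_on UNIV D"
    unfolding D_def DD_def by (intro continuous_intros Pc) auto
  have fc: "continuous_on UNIV f" by (rule fd(2))
  have [measurable]: "f \<in> borel_measurable lborel" "D \<in> borel_measurable lborel"
    using fc Dc by (simp_all add: borel_measurable_continuous_onI)
  define Rr where "Rr x = D x / norm x" for x
  have Req: "radial_deriv f x = Rr x" for x
    unfolding Rr_def D_def using radial_deriv_eq[OF fd(1), of x] DDeq by simp
  have DRr: "D x = norm x * Rr x" for x
  proof (cases "x = 0")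
    case True then show ?thesis by (simp add: D_def DD_def)
  qed (simp add: Rr_def)
  have DDz: "norm y \<ge> \<rho> \<Longrightarrow> DD y x = 0" for y x
    using supp[of y] DDeq[of y x] by simp
  obtain Bf where Bf: "\<And>y. norm y \<le> 2 * \<rho> \<Longrightarrow> \<bar>f y\<bar> \<le> Bf"
  proof -
    have "compact (f ` cball 0 (2 * \<rho>))"
      by (rule compact_continuous_image) (auto intro: continuous_on_subset[OF fc])
    then obtain B where "\<forall>y\<in>f ` cball 0 (2 * \<rho>). norm y \<le> B" using compact_imp_bounded bounded_iff by metis
    then have "\<And>y. norm y \<le> 2 * \<rho> \<Longrightarrow> \<bar>f y\<bar> \<le> B" by auto
    then show ?thesis by (rule that)
  qed
  obtain BP where BP: "\<And>y. norm y \<le> 2 * \<rho> \<Longrightarrow> (\<Sum>i\<in>Basis. \<bar>P i y\<bar>) \<le> BP"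
  proof -
    have c: "continuous_on UNIV (\<lambda>y. \<Sum>i\<in>Basis. \<bar>P i y\<bar>)" by (intro continuous_intros Pc) auto
    have "compact ((\<lambda>y. \<Sum>i\<in>Basis. \<bar>P i y\<bar>) ` cball 0 (2 * \<rho>))"
      by (rule compact_continuous_image) (auto intro: continuous_on_subset[OF c])
    then obtain B where "\<forall>y\<in>(\<lambda>y. \<Sum>i\<in>Basis. \<bar>P i y\<bar>) ` cball 0 (2 * \<rho>). norm y \<le> B"
      using compact_imp_bounded bounded_iff by metis
    then have "\<And>y. norm y \<le> 2 * \<rho> \<Longrightarrow> (\<Sum>i\<in>Basis. \<bar>P i y\<bar>) \<le> B" by auto
    then show ?thesis by (rule that)
  qed
  have DDb: "\<bar>DD y x\<bar> \<le> norm x * BP" if "norm y \<le> 2 * \<rho>" for y x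
  proof -
    have "\<bar>DD y x\<bar> \<le> (\<Sum>i\<in>Basis. \<bar>(x \<bullet> i) * P i y\<bar>)" unfolding DD_def by (rule sum_abs)
    also have "\<dots> \<le> (\<Sum>i\<in>Basis. norm x * \<bar>P i y\<bar>)"
      by (intro sum_mono) (simp add: abs_mult Basis_le_norm mult_right_mono)
    also have "\<dots> = norm x * (\<Sum>i\<in>Basis. \<bar>P i y\<bar>)" by (simp add: sum_distrib_left)
    also have "\<dots> \<le> norm x * BP" using BP[OF that] by (simp add: mult_left_mono)
    finally show ?thesis .
  qed
  have BP0: "0 \<le> BP" proof -
    have "0 \<le> (\<Sum>i\<in>Basis. \<bar>P i 0\<bar>)" by (rule sum_nonneg) simp
    also have "\<dots> \<le> BP" using BP[of 0] \<rho> by simp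
    finally show ?thesis .
  qed
  have Bf0: "0 \<le> Bf" using Bf[of 0] \<rho> by simp
  have KKc: "continuous_on UNIV (\<lambda>r. KK \<alpha> \<beta> t r) \<Longrightarrow> True" by simp
  have KKcont: "continuous_on {0..} (KK \<alpha> \<beta> t)"
    unfolding KK_def[abs_def]
    by (intro continuous_intros continuous_on_compose2[OF psi_cont]) auto
  obtain BK where BK: "\<And>r. r \<in> {0..2*\<rho>} \<Longrightarrow> \<bar>KK \<alpha> \<beta> t r\<bar> \<le> BK"
  proof -
    obtain B where "\<forall>r\<in>{0..2*\<rho>}. \<bar>KK \<alpha> \<beta> t r\<bar> \<le> B"
      using cont_bound[OF continuous_on_subset[OF KKcont, of "{0..2*\<rho>}"]] by auto
    then show ?thesis using that by blast
  qed
  obtain BKd where BKd: "\<And>r. r \<in> {0..2*\<rho>} \<Longrightarrow> \<bar>Kd \<alpha> \<beta> t r\<bar> \<le> BKd"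
  proof -
    define K1f where "K1f r = (1 / mm \<alpha> \<beta>) * ((1 - \<alpha>) * (1 + t - r) powr (\<alpha> - 2) / (1 + r) - (1 + t - r) powr (\<alpha> - 1) / (1 + r)^2)" for r
    define K2f where "K2f r = (1 / mm \<alpha> \<beta>) * ((\<beta> - 1) * (1 + r - t) powr (\<beta> - 2) / (1 + r) - (1 + r - t) powr (\<beta> - 1) / (1 + r)^2)" for r
    have c1: "continuous_on {0..t} K1f" unfolding K1f_def by (intro continuous_intros) auto
    have c2: "continuous_on {t..t+2*\<rho>} K2f" unfolding K2f_def using t by (intro continuous_intros) auto
    obtain B1 where B1: "\<forall>r\<in>{0..t}. \<bar>K1f r\<bar> \<le> B1" using cont_bound[OF c1] by auto
    obtain B2 where B2: "\<forall>r\<in>{t..t+2*\<rho>}. \<bar>K2f r\<bar> \<le> B2" using cont_bound[OF c2] by auto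
    have "\<bar>Kd \<alpha> \<beta> t r\<bar> \<le> max B1 B2" if r: "r \<in> {0..2*\<rho>}" for r
    proof (cases "r < t")
      case True
      then have e: "Kd \<alpha> \<beta> t r = K1f r" by (simp add: Kd_def K1f_def)
      have "r \<in> {0..t}" using r True by auto
      then have "\<bar>K1f r\<bar> \<le> B1" using B1 by blast
      then show ?thesis using e by simp
    next
      case False
      then have e: "Kd \<alpha> \<beta> t r = K2f r" by (simp add: Kd_def K2f_def)
      have "r \<in> {t..t+2*\<rho>}" using r False t by auto
      then have "\<bar>K2f r\<bar> \<le> B2" using B2 by blast
      then show ?thesis using e by simp
    qed
    then show ?thesis by (rule that)
  qed
  have BK0: "0 \<le> BK" using BK[of 0] \<rho> by auto
  have BKd0: "0 \<le> BKd" using BKd[of 0] \<rho> by auto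
  define G where "G x = KK \<alpha> \<beta> t (norm x) * (f x)^2" for x
  have KKn: "continuous_on UNIV (\<lambda>x::real^2. KK \<alpha> \<beta> t (norm x))"
    by (rule continuous_on_compose2[OF KKcont continuous_on_norm_id]) auto
  have Gc: "continuous_on UNIV G"
    unfolding G_def by (intro continuous_intros KKn fc)
  have Gz: "norm x \<ge> \<rho> \<Longrightarrow> G x = 0" for x using supp[of x] by (simp add: G_def)
  define Gd where "Gd x = norm x * Kd \<alpha> \<beta> t (norm x) * (f x)^2 + KK \<alpha> \<beta> t (norm x) * (2 * f x * D x)" for x
  have Gdm: "Gd \<in> borel_measurable lborel" unfolding Gd_def Kd_def KK_def psi_def by measurable
  define g' where "g' x \<nu> = norm x * Kd \<alpha> \<beta> t (\<nu> * norm x) * (f (\<nu> *\<^sub>R x))^2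
      + KK \<alpha> \<beta> t (\<nu> * norm x) * (2 * f (\<nu> *\<^sub>R x) * DD (\<nu> *\<^sub>R x) x)" for x \<nu>
  have gder: "((\<lambda>\<mu>. G (\<mu> *\<^sub>R x)) has_real_derivative g' x \<nu>) (at \<nu>)"
    if x: "x \<noteq> 0" and \<nu>: "0 < \<nu>" and ne: "\<nu> * norm x \<noteq> t" for x \<nu>
  proof -
    have nx: "0 < norm x" using x by simp
    have pos: "0 < \<nu> * norm x" using nx \<nu> by simp
    have lm: "((\<lambda>\<mu>. \<mu> * norm x) has_real_derivative norm x) (at \<nu>)"
      by (auto intro!: derivative_eq_intros)
    have k: "((\<lambda>\<mu>. KK \<alpha> \<beta> t (\<mu> * norm x)) has_real_derivative Kd \<alpha> \<beta> t (\<nu> * norm x) * norm x) (at \<nu>)"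
      by (rule DERIV_chain2[OF KK_deriv[OF a b pos ne] lm])
    have fD: "(f has_derivative frechet_derivative f (at (\<nu> *\<^sub>R x))) (at (\<nu> *\<^sub>R x))"
      using fd(1) frechet_derivative_works by blast
    have lin: "((\<lambda>\<mu>::real. \<mu> *\<^sub>R x) has_derivative (\<lambda>h. h *\<^sub>R x)) (at \<nu>)"
      by (auto intro!: derivative_eq_intros)
    have "((\<lambda>\<mu>. f (\<mu> *\<^sub>R x)) has_derivative (\<lambda>h. frechet_derivative f (at (\<nu> *\<^sub>R x)) (h *\<^sub>R x))) (at \<nu>)"
      using has_derivative_compose[OF lin fD] .
    moreover have "(\<lambda>h. frechet_derivative f (at (\<nu> *\<^sub>R x)) (h *\<^sub>R x)) = (*) (DD (\<nu> *\<^sub>R x) x)"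
      using fd_scale[OF fd(1)] DDeq by (auto simp: mult.commute)
    ultimately have fdv: "((\<lambda>\<mu>. f (\<mu> *\<^sub>R x)) has_real_derivative DD (\<nu> *\<^sub>R x) x) (at \<nu>)"
      by (simp add: has_field_derivative_def)
    have ff: "((\<lambda>\<mu>. f (\<mu> *\<^sub>R x) * f (\<mu> *\<^sub>R x)) has_real_derivative
        DD (\<nu> *\<^sub>R x) x * f (\<nu> *\<^sub>R x) + DD (\<nu> *\<^sub>R x) x * f (\<nu> *\<^sub>R x)) (at \<nu>)"
      by (rule DERIV_mult[OF fdv fdv])
    have pr: "((\<lambda>\<mu>. KK \<alpha> \<beta> t (\<mu> * norm x) * (f (\<mu> *\<^sub>R x) * f (\<mu> *\<^sub>R x))) has_real_derivative
        Kd \<alpha> \<beta> t (\<nu> * norm x) * norm x * (f (\<nu> *\<^sub>R x) * f (\<nu> *\<^sub>R x))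
        + (DD (\<nu> *\<^sub>R x) x * f (\<nu> *\<^sub>R x) + DD (\<nu> *\<^sub>R x) x * f (\<nu> *\<^sub>R x)) * KK \<alpha> \<beta> t (\<nu> * norm x)) (at \<nu>)"
      by (rule DERIV_mult[OF k ff])
    have pr2: "((\<lambda>\<mu>. KK \<alpha> \<beta> t (\<mu> * norm x) * (f (\<mu> *\<^sub>R x) * f (\<mu> *\<^sub>R x))) has_real_derivative g' x \<nu>) (at \<nu>)"
      using pr by (rule DERIV_cong) (simp add: g'_def power2_eq_square algebra_simps)
    show ?thesis
    proof (rule has_field_derivative_transform_within_open[OF pr2, where S = "{0<..}"])
      fix \<mu> :: real assume "\<mu> \<in> {0<..}"
      then show "KK \<alpha> \<beta> t (\<mu> * norm x) * (f (\<mu> *\<^sub>R x) * f (\<mu> *\<^sub>R x)) = G (\<mu> *\<^sub>R x)"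
        by (simp add: G_def power2_eq_square)
    qed (use \<nu> in auto)
  qed
  define N where "N = {0::real^2} \<union> sphere 0 t"
  have Nnull: "N \<in> null_sets lborel"
  proof -
    have s: "sphere (0::real^2) t \<in> null_sets lborel"
      using negligible_sphere[of "0::real^2" t]
      by (auto simp: null_sets_completion_iff negligible_iff_null_sets negligible_convex_frontier)
    have z: "{0::real^2} \<in> null_sets lborel" by (rule countable_imp_null_set_lborel) simp
    show ?thesis unfolding N_def by (rule null_sets.Un[OF z s])
  qed
  have der1: "((\<lambda>\<mu>. G (\<mu> *\<^sub>R x)) has_real_derivative Gd x) (at 1)" if "x \<notin> N" for x
  proof -
    have "x \<noteq> 0" "1 * norm x \<noteq> t" using that by (auto simp: N_def)
    from gder[OF this(1) _ this(2)] show ?thesis by (simp add: g'_def Gd_def D_def)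
  qed
  define Mdom where "Mdom = \<rho> * BKd * Bf^2 + BK * (2 * Bf * (\<rho> * BP))"
  have Mdom0: "0 \<le> Mdom" unfolding Mdom_def using \<rho> BKd0 BK0 Bf0 BP0 by simp
  have gb: "\<bar>g' x \<nu>\<bar> \<le> Mdom" if x: "norm x < \<rho>" and \<nu>: "\<nu> \<in> {1..2}" for x \<nu>
  proof -
    have n1: "norm (\<nu> *\<^sub>R x) \<le> 2 * \<rho>" using x \<nu> by (simp add: mult_mono)
    have n2: "\<nu> * norm x \<in> {0..2*\<rho>}" using x \<nu> by (auto simp: mult_mono)
    have f1: "\<bar>f (\<nu> *\<^sub>R x)\<bar> \<le> Bf" by (rule Bf[OF n1])
    have f2: "\<bar>(f (\<nu> *\<^sub>R x))^2\<bar> \<le> Bf^2" unfolding power2_eq_square by (rule abs_mult_le[OF f1 f1])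
    have d1: "\<bar>DD (\<nu> *\<^sub>R x) x\<bar> \<le> \<rho> * BP"
      using DDb[OF n1, of x] x BP0 by (smt (verit) mult_right_mono)
    have t1: "\<bar>norm x * Kd \<alpha> \<beta> t (\<nu> * norm x) * (f (\<nu> *\<^sub>R x))^2\<bar> \<le> \<rho> * BKd * Bf^2"
      by (intro abs_mult_le f2 BKd[OF n2]) (use x in auto)
    have t2: "\<bar>KK \<alpha> \<beta> t (\<nu> * norm x) * (2 * f (\<nu> *\<^sub>R x) * DD (\<nu> *\<^sub>R x) x)\<bar> \<le> BK * (2 * Bf * (\<rho> * BP))"
      by (intro abs_mult_le BK[OF n2] d1 f1) auto
    show ?thesis unfolding g'_def Mdom_def using t1 t2 by (smt (verit))
  qed
  have dom: "\<bar>G (\<mu> *\<^sub>R x) - G x\<bar> \<le> Mdom * (\<mu> - 1)" if \<mu>: "1 \<le> \<mu>" "\<mu> \<le> 2" for x \<mu>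
  proof (cases "norm x < \<rho>")
    case False
    have "norm (\<mu> *\<^sub>R x) \<ge> norm x" using \<mu> by (simp add: mult_le_cancel_right1)
    then have "G (\<mu> *\<^sub>R x) = 0" "G x = 0" using False by (auto intro!: Gz)
    then show ?thesis using Mdom0 \<mu> by simp
  next
    case True
    show ?thesis
    proof (cases "x = 0")
      case True then show ?thesis using Mdom0 \<mu> by simp
    next
      case xn: False
      have "\<bar>G (\<mu> *\<^sub>R x) - G (1 *\<^sub>R x)\<bar> \<le> Mdom * (\<mu> - 1)"
      proof (rule deriv_bound_finite[where S = "{t / norm x}" and g' = "g' x"])
        show "continuous_on {1..\<mu>} (\<lambda>\<nu>. G (\<nu> *\<^sub>R x))"
          by (rule continuous_on_compose2[OF Gc]) (auto intro!: continuous_intros)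
        fix \<nu> assume \<nu>: "\<nu> \<in> {1<..<\<mu>} - {t / norm x}"
        then have "\<nu> * norm x \<noteq> t" using xn by (auto simp: field_simps)
        then show "((\<lambda>\<nu>. G (\<nu> *\<^sub>R x)) has_real_derivative g' x \<nu>) (at \<nu>)"
          using gder[OF xn] \<nu> by auto
      next
        fix \<nu> assume "\<nu> \<in> {1..\<mu>}"
        then show "\<bar>g' x \<nu>\<bar> \<le> Mdom" using gb[OF True] \<mu> by auto
      qed (use \<mu> in auto)
      then show ?thesis by simp
    qed
  qed
  have SI: "integrable lborel Gd \<and> (\<integral>x. Gd x \<partial>lborel) = -2 * (\<integral>x. G x \<partial>lborel)"
    by (rule scaling_identity[OF Gc Gz Gdm Nnull der1 dom])
  have W1c: "continuous_on UNIV (W1 \<alpha> \<beta>)"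
    unfolding W1_def[abs_def] by (intro continuous_on_divide wv_cont continuous_intros) auto
  obtain BW where BW: "\<forall>q\<in>{-t..\<rho>}. \<bar>W1 \<alpha> \<beta> q\<bar> \<le> BW"
    using cont_bound[OF continuous_on_subset[OF W1c]] by blast
  obtain Bv where Bv: "\<forall>q\<in>{-t..\<rho>}. \<bar>weight_v \<alpha> \<beta> q\<bar> \<le> Bv"
    using cont_bound[OF continuous_on_subset[OF wv_cont]] by blast
  have qin: "norm x - t \<in> {-t..\<rho>}" if "norm x < \<rho>" for x :: "real^2" using that t by auto
  have n2: "norm x \<in> {0..2*\<rho>}" if "norm x < \<rho>" for x :: "real^2" using that \<rho> by auto
  have n1: "norm x \<le> 2 * \<rho>" if "norm x < \<rho>" for x :: "real^2" using that \<rho> by auto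
  have Rb: "\<bar>Rr x\<bar> \<le> BP" if "norm x < \<rho>" for x
  proof (cases "x = 0")
    case True then show ?thesis using BP0 by (simp add: Rr_def)
  next
    case False
    have "\<bar>D x\<bar> \<le> norm x * BP" unfolding D_def by (rule DDb[OF n1[OF that]])
    then show ?thesis using False by (simp add: Rr_def abs_divide divide_le_eq mult.commute)
  qed
  have Rz: "Rr x = 0" if "norm x \<ge> \<rho>" for x using DDz[OF that, of x] by (simp add: Rr_def D_def)
  have fz: "f x = 0" if "norm x \<ge> \<rho>" for x using supp[OF that] by simp
  have fb2: "\<bar>(f x)^2\<bar> \<le> Bf^2" if "norm x < \<rho>" for x
    unfolding power2_eq_square by (rule abs_mult_le; rule Bf[OF n1[OF that]])
  have Rb2: "\<bar>(Rr x)^2\<bar> \<le> BP^2" if "norm x < \<rho>" for x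
    unfolding power2_eq_square by (rule abs_mult_le; rule Rb[OF that])
  define Wf where "Wf x = W1 \<alpha> \<beta> (norm x - t) * (f x)^2" for x
  define Vr where "Vr x = weight_v \<alpha> \<beta> (norm x - t) * (Rr x)^2" for x
  define E where "E x = (norm x * Kd \<alpha> \<beta> t (norm x) + 2 * KK \<alpha> \<beta> t (norm x)) * (f x)^2" for x
  define H where "H x = -2 * (norm x * KK \<alpha> \<beta> t (norm x) * f x * Rr x)" for x
  have iWf: "integrable lborel Wf"
  proof (rule intbd2[where \<rho> = \<rho>])
    show "Wf \<in> borel_measurable lborel" unfolding Wf_def W1_def weight_v_def by measurable
    fix x :: "real^2" assume "norm x < \<rho>"
    then show "\<bar>Wf x\<bar> \<le> BW * Bf^2" unfolding Wf_def using BW qin fb2 by (intro abs_mult_le) auto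
  qed (simp add: Wf_def fz)
  have iVr: "integrable lborel Vr"
  proof (rule intbd2[where \<rho> = \<rho>])
    show "Vr \<in> borel_measurable lborel" unfolding Vr_def weight_v_def Rr_def by measurable
    fix x :: "real^2" assume "norm x < \<rho>"
    then show "\<bar>Vr x\<bar> \<le> Bv * BP^2" unfolding Vr_def using Bv qin Rb2 by (intro abs_mult_le) auto
  qed (simp add: Vr_def Rz)
  have iE: "integrable lborel E"
  proof (rule intbd2[where \<rho> = \<rho>])
    show "E \<in> borel_measurable lborel" unfolding E_def Kd_def KK_def psi_def by measurable
    fix x :: "real^2" assume x: "norm x < \<rho>"
    have "\<bar>norm x * Kd \<alpha> \<beta> t (norm x) + 2 * KK \<alpha> \<beta> t (norm x)\<bar> \<le> \<rho> * BKd + 2 * BK"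
    proof -
      have "\<bar>norm x * Kd \<alpha> \<beta> t (norm x)\<bar> \<le> \<rho> * BKd" using x BKd[OF n2[OF x]] by (intro abs_mult_le) auto
      moreover have "\<bar>2 * KK \<alpha> \<beta> t (norm x)\<bar> \<le> 2 * BK" using BK[OF n2[OF x]] by simp
      ultimately show ?thesis by linarith
    qed
    then show "\<bar>E x\<bar> \<le> (\<rho> * BKd + 2 * BK) * Bf^2" unfolding E_def using fb2[OF x] by (intro abs_mult_le)
  qed (simp add: E_def fz)
  have iG: "integrable lborel G"
  proof (rule intbd2[where \<rho> = \<rho>])
    show "G \<in> borel_measurable lborel" using Gc by (simp add: borel_measurable_continuous_onI)
    fix x :: "real^2" assume x: "norm x < \<rho>"
    then show "\<bar>G x\<bar> \<le> BK * Bf^2" unfolding G_def using fb2[OF x] BK[OF n2[OF x]] by (intro abs_mult_le)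
  qed (simp add: G_def fz)
  have Eeq: "E x = Gd x + 2 * G x + H x" for x
    unfolding E_def Gd_def G_def H_def DRr by (simp add: algebra_simps power2_eq_square)
  have Heq: "H = (\<lambda>x. E x - Gd x - 2 * G x)" using Eeq by (auto simp: fun_eq_iff)
  have iGd: "integrable lborel Gd" using SI by simp
  have iH: "integrable lborel H" unfolding Heq using iE iGd iG by auto
  have intE: "(\<integral>x. E x \<partial>lborel) = (\<integral>x. H x \<partial>lborel)"
  proof -
    have "(\<integral>x. E x \<partial>lborel) = (\<integral>x. Gd x \<partial>lborel) + 2 * (\<integral>x. G x \<partial>lborel) + (\<integral>x. H x \<partial>lborel)"
      unfolding Eeq using iGd iG iH by simp
    then show ?thesis using SI by simp
  qed
  have le1: "(\<integral>x. Wf x \<partial>lborel) \<le> (\<integral>x. E x \<partial>lborel)"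
  proof (rule integral_mono[OF iWf iE])
    fix x :: "real^2"
    have "W1 \<alpha> \<beta> (norm x - t) \<le> norm x * Kd \<alpha> \<beta> t (norm x) + 2 * KK \<alpha> \<beta> t (norm x)"
      by (rule key_ineq[OF a b norm_ge_zero])
    then show "Wf x \<le> E x" unfolding Wf_def E_def by (rule mult_right_mono) simp
  qed
  define A2 where "A2 = 2 * (1 / mm \<alpha> \<beta>)^2"
  have le2: "(\<integral>x. H x \<partial>lborel) \<le> (\<integral>x. Wf x / 2 + A2 * Vr x \<partial>lborel)"
  proof (rule integral_mono[OF iH])
    show "integrable lborel (\<lambda>x. Wf x / 2 + A2 * Vr x)" using iWf iVr by auto
    fix x :: "real^2"
    show "H x \<le> Wf x / 2 + A2 * Vr x"
      using pointwise_ineq[OF a b norm_ge_zero, of x t "f x" "Rr x"]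
      unfolding H_def Wf_def Vr_def A2_def by (simp add: mult.assoc)
  qed
  have "(\<integral>x. Wf x / 2 + A2 * Vr x \<partial>lborel) = (\<integral>x. Wf x \<partial>lborel) / 2 + A2 * (\<integral>x. Vr x \<partial>lborel)"
    using iWf iVr by simp
  with le1 le2 intE have fin: "(\<integral>x. Wf x \<partial>lborel) \<le> 4 * (1 / mm \<alpha> \<beta>)^2 * (\<integral>x. Vr x \<partial>lborel)"
    unfolding A2_def by linarith
  have e1: "(\<lambda>x. W1 \<alpha> \<beta> (norm x - t) * (f x)^2) = Wf" by (simp add: Wf_def fun_eq_iff)
  have e2: "(\<lambda>x. weight_v \<alpha> \<beta> (norm x - t) * (radial_deriv f x)^2) = Vr" by (simp add: Vr_def Req fun_eq_iff)
  show ?thesis unfolding e1 e2 using iWf iVr fin by simp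
qed

theorem proposition1p8:
  fixes \<alpha> \<beta> :: real
  assumes "\<alpha> < 1" and "\<beta> > 1"
  shows "\<exists>C>0. \<forall>(t::real) (f::real^2 \<Rightarrow> real). t \<ge> 0 \<longrightarrow> smooth f \<longrightarrow> compact_support f \<longrightarrow>
     sqrt (\<integral>x. (sqrt (weight_v \<alpha> \<beta> (norm x - t)) / (1 + \<bar>norm x - t\<bar>) * f x)\<^sup>2 \<partial>lborel)
     \<le> C * sqrt (\<integral>x. (sqrt (weight_v \<alpha> \<beta> (norm x - t)) * radial_deriv f x)\<^sup>2 \<partial>lborel)"
proof -
  have m: "0 < mm \<alpha> \<beta>" using mm_pos assms by blast
  show ?thesis
  proof (intro exI[of _ "2 / mm \<alpha> \<beta>"] conjI allI impI)
    show "0 < 2 / mm \<alpha> \<beta>" using m by simp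
    fix t :: real and f :: "real^2 \<Rightarrow> real"
    assume t: "0 \<le> t" and sm: "smooth f" and cs: "compact_support f"
    have e1: "(\<lambda>x. (sqrt (weight_v \<alpha> \<beta> (norm x - t)) / (1 + \<bar>norm x - t\<bar>) * f x)\<^sup>2)
        = (\<lambda>x. W1 \<alpha> \<beta> (norm x - t) * (f x)^2)"
      by (simp add: fun_eq_iff W1_def power_mult_distrib power_divide wv_nonneg)
    have e2: "(\<lambda>x. (sqrt (weight_v \<alpha> \<beta> (norm x - t)) * radial_deriv f x)\<^sup>2)
        = (\<lambda>x. weight_v \<alpha> \<beta> (norm x - t) * (radial_deriv f x)^2)"
      by (simp add: fun_eq_iff power_mult_distrib wv_nonneg)
    define X where "X = (\<integral>x. weight_v \<alpha> \<beta> (norm x - t) * (radial_deriv f x)^2 \<partial>lborel)"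
    have mi: "(\<integral>x. W1 \<alpha> \<beta> (norm x - t) * (f x)^2 \<partial>lborel) \<le> 4 * (1 / mm \<alpha> \<beta>)^2 * X"
      using main_ineq[OF assms(1) assms(2) t sm cs] unfolding X_def by blast
    have "sqrt (\<integral>x. W1 \<alpha> \<beta> (norm x - t) * (f x)^2 \<partial>lborel) \<le> sqrt (4 * (1 / mm \<alpha> \<beta>)^2 * X)"
      using mi by (rule real_sqrt_le_mono)
    also have "sqrt (4 * (1 / mm \<alpha> \<beta>)^2 * X) = 2 / mm \<alpha> \<beta> * sqrt X"
    proof -
      have "4 * (1 / mm \<alpha> \<beta>)^2 = (2 / mm \<alpha> \<beta>)^2" by (simp add: power2_eq_square)
      then show ?thesis using m by (simp add: real_sqrt_mult)
    qed
    finally show "sqrt (\<integral>x. (sqrt (weight_v \<alpha> \<beta> (norm x - t)) / (1 + \<bar>norm x - t\<bar>) * f x)\<^sup>2 \<partial>lborel)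
     \<le> 2 / mm \<alpha> \<beta> * sqrt (\<integral>x. (sqrt (weight_v \<alpha> \<beta> (norm x - t)) * radial_deriv f x)\<^sup>2 \<partial>lborel)"
      unfolding e1 e2 X_def .
  qed
qed

end
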